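(* There is an absolute constant $C$ such that the following holds. Let $\mathcal D$ be an atomic filtration on $I_0=[0,1]$ (as described in the context) and let $f\in L^1(I_0)$. Then there exists a sparse collection $\mathcal S\subset\mathcal D$ (depending on $f$) such that $Sf(x)\le C\,S_{\mathcal S}f(x)$ for almost every $x\in I_0$.
   Context: $I_0=[0,1]$ carries a probability measure $\nu$ ($|I|=\nu(I)$). Atomic filtration: an increasing sequence of $\sigma$-algebras $\mathcal F_n$, $n\ge0$, with $\mathcal F_0$ trivial, each generated by a finite partition $\mathcal D_n$ of $I_0$ into sets of positive measure (atoms), $\mathcal D_0=\{I_0\}$; an atom is formally a pair $(I,n)$, $I\in\mathcal D_n$, and $\mathcal D=\bigcup_n\mathcal D_n$; $\mathrm{ch}(I)$ are the atoms of $\mathcal D_{n+1}$ contained in $I$. Averages $\langle f\rangle_I=|I|^{-1}\int_If\,d\nu$, $\mathbb E_If=\langle f\rangle_I\mathbf 1_I$, $\Delta_If=\sum_{I'\in\mathrm{ch}(I)}\mathbb E_{I'}f-\mathbb E_If$, $Sf=\big(\sum_{I\in\mathcal D}(\Delta_If)^2\big)^{1/2}$. A collection $\mathcal S\subset\mathcal D$ is sparse if for every $J\in\mathcal S$, $\sum_{I\in\mathrm{ch}_{\mathcal S}J}|I|\le|J|/2$, where $\mathrm{ch}_{\mathcal S}J$ denotes the maximal (by inclusion) elements of $\mathcal S$ strictly contained in $J$. Sparse square function: $S_{\mathcal S}f(x)=\big(\sum_{I\in\mathcal S}\langle|f|\rangle_I^2\mathbf 1_I(x)\big)^{1/2}$.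 *)

theory Defs
  imports "HOL-Probability.Probability"
begin

definition unit_prob :: "real measure \<Rightarrow> bool" where
  "unit_prob M \<longleftrightarrow> prob_space M \<and> space M = {0..1} \<and>
      sets M = sets (restrict_space borel {0..1::real})"

text \<open>Atomic filtration: D n is the finite partition generating F n.
  Increasing sigma-algebras generated by finite partitions means each atom of
  D (Suc n) lies inside an atom of D n.\<close>

definition atomic_filtration :: "real measure \<Rightarrow> (nat \<Rightarrow> real set set) \<Rightarrow> bool" where
  "atomic_filtration M D \<longleftrightarrow>
     D 0 = {{0..1}} \<and>
     (\<forall>n. finite (D n) \<and> \<Union>(D n) = {0..1} \<and> disjoint (D n) \<and>
          (\<forall>I\<in>D n. I \<in> sets M \<and> measure M I > 0)) \<and>
     (\<forall>n. \<forall>I\<in>D (Suc n). \<exists>J\<in>D n. I \<subseteq> J)"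

definition atoms :: "(nat \<Rightarrow> real set set) \<Rightarrow> (real set \<times> nat) set" where
  "atoms D = {(I, n). I \<in> D n}"

definition avg :: "real measure \<Rightarrow> real set \<Rightarrow> (real \<Rightarrow> real) \<Rightarrow> real" where
  "avg M I f = (LINT x:I|M. f x) / measure M I"

definition cond_exp_atom :: "real measure \<Rightarrow> real set \<Rightarrow> (real \<Rightarrow> real) \<Rightarrow> real \<Rightarrow> real" where
  "cond_exp_atom M I f x = avg M I f * indicator I x"

definition ch :: "(nat \<Rightarrow> real set set) \<Rightarrow> real set \<Rightarrow> nat \<Rightarrow> real set set" where
  "ch D I n = {I' \<in> D (Suc n). I' \<subseteq> I}"

definition mart_diff :: "real measure \<Rightarrow> (nat \<Rightarrow> real set set) \<Rightarrow> real set \<Rightarrow> nat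
      \<Rightarrow> (real \<Rightarrow> real) \<Rightarrow> real \<Rightarrow> real" where
  "mart_diff M D I n f x = (\<Sum>I'\<in>ch D I n. cond_exp_atom M I' f x) - cond_exp_atom M I f x"

definition esqrt :: "ennreal \<Rightarrow> ennreal" where
  "esqrt t = (if t = \<infinity> then \<infinity> else ennreal (sqrt (enn2real t)))"

definition square_fn :: "real measure \<Rightarrow> (nat \<Rightarrow> real set set) \<Rightarrow> (real \<Rightarrow> real) \<Rightarrow> real \<Rightarrow> ennreal" where
  "square_fn M D f x = esqrt (\<Sum>n. \<Sum>I\<in>D n. ennreal ((mart_diff M D I n f x)\<^sup>2))"

definition atom_less :: "real set \<times> nat \<Rightarrow> real set \<times> nat \<Rightarrow> bool" where
  "atom_less a b \<longleftrightarrow> fst a \<subseteq> fst b \<and> snd b \<le> snd a \<and> a \<noteq> b"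

definition chS :: "(real set \<times> nat) set \<Rightarrow> real set \<times> nat \<Rightarrow> (real set \<times> nat) set" where
  "chS S J = {a \<in> S. atom_less a J \<and> \<not> (\<exists>b\<in>S. atom_less b J \<and> atom_less a b)}"

definition sparse_collection :: "real measure \<Rightarrow> (real set \<times> nat) set \<Rightarrow> bool" where
  "sparse_collection M S \<longleftrightarrow> (\<forall>J\<in>S.
      (\<Sum>k. \<Sum>I\<in>{I. (I, k) \<in> chS S J}. emeasure M I) \<le> emeasure M (fst J) / 2)"

definition sparse_square_fn :: "real measure \<Rightarrow> (real set \<times> nat) set \<Rightarrow> (real \<Rightarrow> real) \<Rightarrow> real \<Rightarrow> ennreal" where
  "sparse_square_fn M S f x =
     esqrt (\<Sum>n. \<Sum>I\<in>{I. (I, n) \<in> S}. ennreal ((avg M I (\<lambda>y. \<bar>f y\<bar>))\<^sup>2 * indicator I x))"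

end

theory Submission
  imports Defs
begin

definition stopc :: "(nat \<Rightarrow> real) \<Rightarrow> (nat \<Rightarrow> real) \<Rightarrow> nat \<Rightarrow> nat \<Rightarrow> bool" where
  "stopc a b p m \<longleftrightarrow> b m > 4 * b p \<or> (\<Sum>j\<in>{p..<m}. (a (Suc j) - a j)\<^sup>2) > 96 * (b p)\<^sup>2"

primrec Lf :: "(nat \<Rightarrow> real) \<Rightarrow> (nat \<Rightarrow> real) \<Rightarrow> nat \<Rightarrow> nat" where
  "Lf a b 0 = 0"
| "Lf a b (Suc n) = (if stopc a b (Lf a b n) (Suc n) then Suc n else Lf a b n)"

lemma Lf_0[simp]: "Lf a b 0 = 0" by simp

lemma Lf_Suc: "Lf a b (Suc n) = (if stopc a b (Lf a b n) (Suc n) then Suc n else Lf a b n)" by simp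

declare Lf.simps(2)[simp del]

lemma Lf_le: "Lf a b n \<le> n"
  by (induction n) (auto simp: Lf_Suc)

lemma Lf_cases: "Lf a b (Suc n) = Suc n \<or> Lf a b (Suc n) = Lf a b n"
  by (simp add: Lf_Suc)

lemma Lf_mono: "m \<le> n \<Longrightarrow> Lf a b m \<le> Lf a b n"
proof (induction n)
  case 0 then show ?case by simp
next
  case (Suc n)
  show ?case
  proof (cases "m = Suc n")
    case False
    then have "Lf a b m \<le> Lf a b n" using Suc by simp
    then show ?thesis using Lf_cases[of a b n] Lf_le[of a b n] by linarith
  qed simp
qed

lemma Lf_idem: "Lf a b (Lf a b n) = Lf a b n"
proof (induction n)
  case 0 then show ?case by simp
next
  case (Suc n)
  from Lf_cases[of a b n] show ?case
  proof
    assume "Lf a b (Suc n) = Suc n" then show ?thesis by simp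
  next
    assume h: "Lf a b (Suc n) = Lf a b n" then show ?thesis using Suc.IH by simp
  qed
qed

lemma Lf_const: "p = Lf a b N \<Longrightarrow> p \<le> m \<Longrightarrow> m \<le> N \<Longrightarrow> Lf a b m = p"
proof -
  assume h: "p = Lf a b N" "p \<le> m" "m \<le> N"
  have 1: "Lf a b m \<le> Lf a b N" by (rule Lf_mono) fact
  have 2: "Lf a b p \<le> Lf a b m" by (rule Lf_mono) fact
  have 3: "Lf a b p = p" unfolding h(1) by (rule Lf_idem)
  show ?thesis using 1 2 3 h(1) by linarith
qed

lemma Lf_nostop: "p = Lf a b N \<Longrightarrow> p < m \<Longrightarrow> m \<le> N \<Longrightarrow> \<not> stopc a b p m"
proof -
  assume h: "p = Lf a b N" "p < m" "m \<le> N"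
  obtain k where k: "m = Suc k" using h(2) by (cases m) auto
  have 1: "Lf a b (Suc k) = p" using Lf_const[OF h(1), of "Suc k"] h k by linarith
  have 2: "Lf a b k = p" using Lf_const[OF h(1), of k] h k by linarith
  show ?thesis
  proof
    assume "stopc a b p m"
    then have "Lf a b (Suc k) = Suc k" using 2 k by (simp add: Lf_Suc)
    then show False using 1 k h(2) by simp
  qed
qed

lemma seq_partial:
  fixes a b :: "nat \<Rightarrow> real"
  assumes ab: "\<And>n. \<bar>a n\<bar> \<le> b n"
  shows "(\<Sum>n<N. (a (Suc n) - a n)\<^sup>2) \<le> 130 * (\<Sum>n<Suc N. if Lf a b n = n then (b n)\<^sup>2 else 0)"
proof -
  define d where "d j = (a (Suc j) - a j)\<^sup>2" for j
  define e where "e n = (if Lf a b n = n then (b n)\<^sup>2 else 0)" for n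
  have e0: "e n \<ge> 0" for n by (simp add: e_def)
  have b0: "b n \<ge> 0" for n using ab[of n] by linarith
  have seg: "(\<Sum>j\<in>{Lf a b N..<N}. d j) \<le> 96 * (b (Lf a b N))\<^sup>2 \<and> b N \<le> 4 * b (Lf a b N)" for N
  proof (cases "Lf a b N < N")
    case True
    then have "\<not> stopc a b (Lf a b N) N" using Lf_nostop[of "Lf a b N" a b N N] by auto
    then show ?thesis by (auto simp: stopc_def d_def not_less)
  next
    case False
    then have "Lf a b N = N" using Lf_le[of a b N] by auto
    then show ?thesis using b0[of N] by simp
  qed
  have inv: "(\<Sum>n<N. d n) \<le> 130 * (\<Sum>n<Lf a b N. e n) + 2 * (b (Lf a b N))\<^sup>2 + (\<Sum>j\<in>{Lf a b N..<N}. d j)" for N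
  proof (induction N)
    case 0 then show ?case by simp
  next
    case (Suc N)
    define p where "p = Lf a b N"
    have pN: "p \<le> N" using Lf_le p_def by auto
    show ?case
    proof (cases "Lf a b (Suc N) = Suc N")
      case False
      then have eq: "Lf a b (Suc N) = p" using Lf_cases[of a b N] by (simp add: p_def)
      have "{p..<Suc N} = insert N {p..<N}" using pN by auto
      then have "(\<Sum>j\<in>{p..<Suc N}. d j) = d N + (\<Sum>j\<in>{p..<N}. d j)" by simp
      moreover have "(\<Sum>n<N. d n) \<le> 130 * (\<Sum>n<p. e n) + 2 * (b p)\<^sup>2 + (\<Sum>j\<in>{p..<N}. d j)"
        using Suc.IH by (simp add: p_def)
      ultimately show ?thesis using eq by simp
    next
      case True
      have s1: "(\<Sum>j\<in>{p..<N}. d j) \<le> 96 * (b p)\<^sup>2" and s2: "b N \<le> 4 * b p"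
        using seg[of N] by (auto simp: p_def)
      have dN: "d N \<le> 2 * (b (Suc N))\<^sup>2 + 2 * (b N)\<^sup>2"
      proof -
        have "d N = 2 * (a (Suc N))\<^sup>2 + 2 * (a N)\<^sup>2 - (a (Suc N) + a N)\<^sup>2"
          unfolding d_def by (simp add: power2_eq_square algebra_simps)
        then have "d N \<le> 2 * (a (Suc N))\<^sup>2 + 2 * (a N)\<^sup>2" by simp
        moreover have "\<bar>a (Suc N)\<bar>\<^sup>2 \<le> (b (Suc N))\<^sup>2" "\<bar>a N\<bar>\<^sup>2 \<le> (b N)\<^sup>2"
          by (rule power_mono[OF ab abs_ge_zero])+
        ultimately show ?thesis by simp
      qed
      have "(b N)\<^sup>2 \<le> (4 * b p)\<^sup>2" by (rule power_mono[OF s2 b0])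
      then have bN2: "(b N)\<^sup>2 \<le> 16 * (b p)\<^sup>2" by (simp add: power_mult_distrib)
      have ep: "e p = (b p)\<^sup>2" using Lf_idem[of a b N] by (simp add: e_def p_def)
      have "(\<Sum>n<Suc N. e n) \<ge> (\<Sum>n<p. e n) + e p"
      proof -
        have "(\<Sum>n<Suc p. e n) \<le> (\<Sum>n<Suc N. e n)"
          using pN e0 by (intro sum_mono2) auto
        then show ?thesis by simp
      qed
      moreover have "(\<Sum>n<Suc N. d n) = (\<Sum>n<N. d n) + d N" by simp
      moreover have "(\<Sum>n<N. d n) \<le> 130 * (\<Sum>n<p. e n) + 2 * (b p)\<^sup>2 + (\<Sum>j\<in>{p..<N}. d j)"
        using Suc.IH by (simp add: p_def)
      ultimately have "(\<Sum>n<Suc N. d n) \<le> 130 * (\<Sum>n<Suc N. e n) + 2 * (b (Suc N))\<^sup>2"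
        using s1 dN bN2 ep by linarith
      then show ?thesis using True by simp
    qed
  qed
  have "(\<Sum>n<N. d n) \<le> 130 * (\<Sum>n<Lf a b N. e n) + 98 * (b (Lf a b N))\<^sup>2"
    using inv[of N] seg[of N] by linarith
  also have "\<dots> \<le> 130 * (\<Sum>n<Suc (Lf a b N). e n)"
    using Lf_idem[of a b N] by (simp add: e_def)
  also have "\<dots> \<le> 130 * (\<Sum>n<Suc N. e n)"
    using Lf_le[of a b N] e0 by (intro mult_left_mono sum_mono2) auto
  finally show ?thesis by (simp add: d_def e_def)
qed


lemma seq_enn:
  fixes a b :: "nat \<Rightarrow> real"
  assumes ab: "\<And>n. \<bar>a n\<bar> \<le> b n"
  shows "(\<Sum>n. ennreal ((a (Suc n) - a n)\<^sup>2)) \<le> ennreal 130 * (\<Sum>n. ennreal (if Lf a b n = n then (b n)\<^sup>2 else 0))"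
proof -
  define e where "e n = (if Lf a b n = n then (b n)\<^sup>2 else 0)" for n
  have e0: "e n \<ge> 0" for n by (simp add: e_def)
  have "(\<Sum>n<N. ennreal ((a (Suc n) - a n)\<^sup>2)) \<le> ennreal 130 * (\<Sum>n. ennreal (e n))" for N
  proof -
    have "(\<Sum>n<N. ennreal ((a (Suc n) - a n)\<^sup>2)) = ennreal (\<Sum>n<N. (a (Suc n) - a n)\<^sup>2)"
      by (rule sum_ennreal) simp
    also have "\<dots> \<le> ennreal (130 * (\<Sum>n<Suc N. e n))"
      using seq_partial[of a b N, OF ab] by (intro ennreal_leI) (simp add: e_def)
    also have "\<dots> = ennreal 130 * (\<Sum>n<Suc N. ennreal (e n))"
      using e0 by (simp add: ennreal_mult sum_ennreal sum_nonneg)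
    also have "\<dots> \<le> ennreal 130 * (\<Sum>n. ennreal (e n))"
      by (intro mult_left_mono sum_le_suminf) auto
    finally show ?thesis .
  qed
  then show ?thesis unfolding suminf_eq_SUP[of "\<lambda>n. ennreal ((a (Suc n) - a n)\<^sup>2)"]
    by (simp add: e_def SUP_least)
qed

lemma esqrt_mono: "s \<le> t \<Longrightarrow> esqrt s \<le> esqrt t"
proof (cases "t = \<infinity>")
  case True then show ?thesis by (simp add: esqrt_def)
next
  case False
  assume st: "s \<le> t"
  then have "s \<noteq> \<infinity>" using False by (auto simp: top_unique)
  moreover have "enn2real s \<le> enn2real t" using st False by (intro enn2real_mono) (auto simp: less_top)
  ultimately show ?thesis using False by (simp add: esqrt_def ennreal_leI)
qed

lemma esqrt_scale: "esqrt (ennreal 130 * t) = ennreal (sqrt 130) * esqrt t"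
proof (cases "t = \<infinity>")
  case True then show ?thesis by (simp add: esqrt_def ennreal_mult_top)
next
  case False
  then obtain r where r: "t = ennreal r" "r \<ge> 0" by (cases t) auto
  have eq: "ennreal 130 * t = ennreal (130 * r)" using r by (simp add: ennreal_mult)
  have "esqrt (ennreal 130 * t) = ennreal (sqrt (130 * r))"
    unfolding eq esqrt_def using r by simp
  also have "\<dots> = ennreal (sqrt 130) * ennreal (sqrt r)"
    using r by (simp add: real_sqrt_mult ennreal_mult)
  also have "ennreal (sqrt r) = esqrt t" using r by (simp add: esqrt_def)
  finally show ?thesis .
qed


lemma Lf_dep: "(\<And>j. j \<le> n \<Longrightarrow> a j = a' j \<and> b j = b' j) \<Longrightarrow> Lf a b n = Lf a' b' n"
proof (induction n)
  case 0 then show ?case by simp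
next
  case (Suc n)
  have IH: "Lf a b n = Lf a' b' n" using Suc by simp
  define p where "p = Lf a b n"
  have pn: "p \<le> n" using Lf_le p_def by simp
  have "stopc a b p (Suc n) = stopc a' b' p (Suc n)"
  proof -
    have "b (Suc n) = b' (Suc n)" "b p = b' p" using Suc.prems pn by auto
    moreover have "(\<Sum>j\<in>{p..<Suc n}. (a (Suc j) - a j)\<^sup>2) = (\<Sum>j\<in>{p..<Suc n}. (a' (Suc j) - a' j)\<^sup>2)"
      using Suc.prems by (intro sum.cong) auto
    ultimately show ?thesis unfolding stopc_def by simp
  qed
  then show ?case using IH by (simp add: Lf_Suc p_def)
qed


lemma Lf_stop_between:
  assumes p: "Lf a b p = p" and k: "Lf a b k = k" and pk: "p < k"
    and nb: "\<forall>i. p < i \<and> i < k \<longrightarrow> Lf a b i \<noteq> i"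
  shows "stopc a b p k"
proof -
  have c: "Lf a b i = p" if "p \<le> i" "i < k" for i
    using that
  proof (induction i rule: dec_induct)
    case base show ?case using p by simp
  next
    case (step i)
    have "Lf a b (Suc i) \<noteq> Suc i" using nb step by auto
    then show ?case using Lf_cases[of a b i] step by auto
  qed
  obtain k' where k': "k = Suc k'" using pk by (cases k) auto
  have "Lf a b k' = p" using c[of k'] pk k' by simp
  then show ?thesis using k k' pk by (auto simp: Lf_Suc split: if_splits)
qed

locale setting =
  fixes M :: "real measure" and D :: "nat \<Rightarrow> real set set" and f :: "real \<Rightarrow> real"
  assumes up: "unit_prob M" and af: "atomic_filtration M D" and intf: "integrable M f"
begin

definition U0 :: "real set" where "U0 = {0..1}"

lemma isprob: "prob_space M" using up unfolding unit_prob_def by auto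
lemma spM: "space M = U0" using up unfolding unit_prob_def U0_def by auto

sublocale P: prob_space M by (rule isprob)

lemma Dfin: "finite (D n)" using af unfolding atomic_filtration_def by auto
lemma Dun: "\<Union>(D n) = U0" using af unfolding atomic_filtration_def U0_def by auto
lemma Ddisj: "disjoint (D n)" using af unfolding atomic_filtration_def by auto
lemma Dsets: "I \<in> D n \<Longrightarrow> I \<in> sets M" using af unfolding atomic_filtration_def by auto
lemma Dpos: "I \<in> D n \<Longrightarrow> measure M I > 0" using af unfolding atomic_filtration_def by auto
lemma Dnest: "I \<in> D (Suc n) \<Longrightarrow> \<exists>J\<in>D n. I \<subseteq> J" using af unfolding atomic_filtration_def by auto
lemma Dsub: "I \<in> D n \<Longrightarrow> I \<subseteq> U0" using Dun[of n] by auto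
lemma Dne: "I \<in> D n \<Longrightarrow> I \<noteq> {}" using Dpos[of I n] by auto
lemma Deq: "I \<in> D n \<Longrightarrow> J \<in> D n \<Longrightarrow> x \<in> I \<Longrightarrow> x \<in> J \<Longrightarrow> I = J"
  using Ddisj[of n] unfolding disjoint_def by blast

definition A :: "nat \<Rightarrow> real \<Rightarrow> real set" where "A n x = (THE I. I \<in> D n \<and> x \<in> I)"

lemma A_eq: "I \<in> D n \<Longrightarrow> x \<in> I \<Longrightarrow> A n x = I"
  unfolding A_def by (intro the_equality) (simp, metis Deq)

lemma A_in: "x \<in> U0 \<Longrightarrow> A n x \<in> D n \<and> x \<in> A n x"
proof -
  assume "x \<in> U0"
  then obtain I where "I \<in> D n" "x \<in> I" using Dun[of n] by blast
  then show ?thesis using A_eq by simp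
qed

lemma A_Suc: "x \<in> U0 \<Longrightarrow> A (Suc n) x \<subseteq> A n x"
proof -
  assume x: "x \<in> U0"
  obtain J where J: "J \<in> D n" "A (Suc n) x \<subseteq> J" using Dnest A_in[OF x, of "Suc n"] by blast
  then have "x \<in> J" using A_in[OF x, of "Suc n"] by auto
  then show ?thesis using A_eq[OF J(1)] J by simp
qed

lemma A_mono: assumes x: "x \<in> U0" and nm: "n \<le> m" shows "A m x \<subseteq> A n x"
  using nm
proof (induction m rule: dec_induct)
  case base then show ?case by simp
next
  case (step m) then show ?case using A_Suc[OF x, of m] by auto
qed

lemma A_det: "y \<in> U0 \<Longrightarrow> z \<in> U0 \<Longrightarrow> A n y = A n z \<Longrightarrow> j \<le> n \<Longrightarrow> A j y = A j z"
proof -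
  assume h: "y \<in> U0" "z \<in> U0" "A n y = A n z" "j \<le> n"
  have "y \<in> A j z" using A_in[OF h(1), of n] A_mono[OF h(2) h(4)] h(3) by auto
  then show ?thesis using A_eq A_in[OF h(2), of j] by blast
qed

lemma meas_dep:
  assumes "\<And>y z. y \<in> U0 \<Longrightarrow> z \<in> U0 \<Longrightarrow> A N y = A N z \<Longrightarrow> P y \<Longrightarrow> P z"
  shows "{y \<in> U0. P y} \<in> sets M"
proof -
  have "{y \<in> U0. P y} = \<Union>{I \<in> D N. \<exists>y\<in>I. P y}"
  proof
    show "{y \<in> U0. P y} \<subseteq> \<Union>{I \<in> D N. \<exists>y\<in>I. P y}"
      using A_in by blast
  next
    show "\<Union>{I \<in> D N. \<exists>y\<in>I. P y} \<subseteq> {y \<in> U0. P y}"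
    proof
      fix z assume "z \<in> \<Union>{I \<in> D N. \<exists>y\<in>I. P y}"
      then obtain I y where I: "I \<in> D N" "z \<in> I" "y \<in> I" "P y" by blast
      have "y \<in> U0" "z \<in> U0" using Dsub[OF I(1)] I(2,3) by auto
      moreover have "A N y = A N z" using A_eq I by simp
      ultimately show "z \<in> {y \<in> U0. P y}" using assms I(4) by blast
    qed
  qed
  moreover have "\<Union>{I \<in> D N. \<exists>y\<in>I. P y} \<in> sets M"
    using Dfin[of N] Dsets by (intro sets.finite_Union) auto
  ultimately show ?thesis by simp
qed

lemma ch_sub: "ch D I n \<subseteq> D (Suc n)" by (auto simp: ch_def)
lemma ch_fin: "finite (ch D I n)" using ch_sub Dfin finite_subset by blast
lemma A_ch: "I \<in> D n \<Longrightarrow> y \<in> I \<Longrightarrow> A (Suc n) y \<in> ch D I n"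
  using A_in[of y "Suc n"] A_Suc[of y n] A_eq[of I n y] Dsub[of I n] by (auto simp: ch_def)

lemma pt_sum:
  fixes c :: "real set \<Rightarrow> real"
  assumes x: "x \<in> U0" and F: "F \<subseteq> D k"
  shows "(\<Sum>I\<in>F. c I * indicator I x) = (if A k x \<in> F then c (A k x) else 0)"
proof -
  have fin: "finite F" using F Dfin finite_subset by blast
  have z: "c I * indicator I x = 0" if "I \<in> F" "I \<noteq> A k x" for I
  proof -
    have "x \<notin> I" using that A_eq[of I k x] F by auto
    then show ?thesis by simp
  qed
  show ?thesis
  proof (cases "A k x \<in> F")
    case True
    have "(\<Sum>I\<in>F. c I * indicator I x) = c (A k x) * indicator (A k x) x + (\<Sum>I\<in>F - {A k x}. c I * indicator I x)"
      by (rule sum.remove[OF fin True])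
    also have "(\<Sum>I\<in>F - {A k x}. c I * indicator I x) = 0" using z by (intro sum.neutral) auto
    finally show ?thesis using True A_in[OF x, of k] by simp
  next
    case False
    then show ?thesis using z by (intro trans[OF sum.neutral]) auto
  qed
qed

lemma ind_ch: "I \<in> D n \<Longrightarrow> indicator I x = (\<Sum>I'\<in>ch D I n. indicator I' x :: real)"
proof -
  assume I: "I \<in> D n"
  show ?thesis
  proof (cases "x \<in> I")
    case True
    then have x: "x \<in> U0" using Dsub I by auto
    have "(\<Sum>I'\<in>ch D I n. 1 * indicator I' x :: real) = 1"
      using pt_sum[OF x ch_sub, of "\<lambda>_. 1" I n] A_ch[OF I True] by simp
    then show ?thesis using True by simp
  next
    case False
    then have "indicator I' x = (0::real)" if "I' \<in> ch D I n" for I'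
      using that by (auto simp: ch_def indicator_def)
    then show ?thesis using False by (simp add: sum.neutral)
  qed
qed

lemma sint_ch:
  fixes g :: "real \<Rightarrow> real"
  assumes I: "I \<in> D n" and g: "integrable M g"
  shows "(LINT x:I|M. g x) = (\<Sum>I'\<in>ch D I n. LINT x:I'|M. g x)"
proof -
  have "(\<lambda>x. indicator I x *\<^sub>R g x) = (\<lambda>x. \<Sum>I'\<in>ch D I n. indicator I' x *\<^sub>R g x)"
    by (rule ext) (simp add: ind_ch[OF I] sum_distrib_right)
  then have "(LINT x:I|M. g x) = integral\<^sup>L M (\<lambda>x. \<Sum>I'\<in>ch D I n. indicator I' x *\<^sub>R g x)"
    by (simp add: set_lebesgue_integral_def)
  also have "\<dots> = (\<Sum>I'\<in>ch D I n. LINT x:I'|M. g x)"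
    unfolding set_lebesgue_integral_def
  proof (rule Bochner_Integration.integral_sum[where f="\<lambda>I' x. indicator I' x *\<^sub>R g x"])
    fix I' assume "I' \<in> ch D I n"
    then have "I' \<in> sets M" using ch_sub Dsets by blast
    then show "integrable M (\<lambda>x. indicator I' x *\<^sub>R g x)" using g by (rule Bochner_Integration.integrable_mult_indicator)
  qed
  finally show ?thesis .
qed

lemma meas_ch: "I \<in> D n \<Longrightarrow> measure M I = (\<Sum>I'\<in>ch D I n. measure M I')"
proof -
  assume I: "I \<in> D n"
  have "(\<Union>I'\<in>ch D I n. I') = I"
  proof
    show "(\<Union>I'\<in>ch D I n. I') \<subseteq> I" by (auto simp: ch_def)
    show "I \<subseteq> (\<Union>I'\<in>ch D I n. I')"
    proof
      fix x assume x: "x \<in> I"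
      then have "x \<in> U0" using Dsub[OF I] by auto
      then have "x \<in> A (Suc n) x" using A_in by auto
      then show "x \<in> (\<Union>I'\<in>ch D I n. I')" using A_ch[OF I x] by auto
    qed
  qed
  moreover have "measure M (\<Union>I'\<in>ch D I n. I') = (\<Sum>I'\<in>ch D I n. measure M I')"
  proof (rule P.finite_measure_finite_Union)
    show "finite (ch D I n)" by (rule ch_fin)
    show "(\<lambda>x. x) ` ch D I n \<subseteq> sets M" using ch_sub Dsets by (meson image_subsetI subsetD)
    show "disjoint_family_on (\<lambda>x. x) (ch D I n)"
    proof (unfold disjoint_family_on_def, intro ballI impI)
      fix a b assume ab: "a \<in> ch D I n" "b \<in> ch D I n" "a \<noteq> b"
      then have "a \<in> D (Suc n)" "b \<in> D (Suc n)" using ch_sub by auto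
      then show "a \<inter> b = {}" using Deq[of a "Suc n" b] ab(3) by blast
    qed
  qed
  ultimately show ?thesis by simp
qed

lemma int_avg: "I \<in> D n \<Longrightarrow> (LINT x:I|M. g x) = measure M I * avg M I g"
  using Dpos[of I n] by (simp add: avg_def)

lemma sint_abs_nn: "0 \<le> (LINT x:I|M. \<bar>f x\<bar>)"
  unfolding set_lebesgue_integral_def by (intro integral_nonneg_AE AE_I2) simp

lemma avg_abs_nn: "0 \<le> avg M I (\<lambda>x. \<bar>f x\<bar>)"
  unfolding avg_def using sint_abs_nn by simp

lemma avg_abs: "I \<in> D n \<Longrightarrow> \<bar>avg M I f\<bar> \<le> avg M I (\<lambda>x. \<bar>f x\<bar>)"
proof -
  assume I: "I \<in> D n"
  have si: "set_integrable M I f" unfolding set_integrable_def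
    using Dsets[OF I] intf by (rule Bochner_Integration.integrable_mult_indicator)
  have "\<bar>LINT x:I|M. f x\<bar> \<le> (LINT x:I|M. \<bar>f x\<bar>)"
    using set_integral_norm_bound[OF si] by simp
  moreover have "0 < measure M I" using Dpos[OF I] .
  ultimately have "\<bar>LINT x:I|M. f x\<bar> / measure M I \<le> (LINT x:I|M. \<bar>f x\<bar>) / measure M I"
    by (intro divide_right_mono) auto
  then show ?thesis unfolding avg_def using Dpos[OF I] by (simp add: abs_divide)
qed

end

context setting
begin

definition aa :: "nat \<Rightarrow> real \<Rightarrow> real" where "aa n y = avg M (A n y) f"
definition bb :: "nat \<Rightarrow> real \<Rightarrow> real" where "bb n y = avg M (A n y) (\<lambda>x. \<bar>f x\<bar>)"
definition st :: "nat \<Rightarrow> real \<Rightarrow> bool" where "st n y \<longleftrightarrow> Lf (\<lambda>j. aa j y) (\<lambda>j. bb j y) n = n"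
definition SS :: "(real set \<times> nat) set" where "SS = {(I, n). I \<in> D n \<and> (\<exists>y\<in>I. st n y)}"

lemma aa_bb: "y \<in> U0 \<Longrightarrow> \<bar>aa n y\<bar> \<le> bb n y"
  unfolding aa_def bb_def using A_in avg_abs by blast

lemma bb_nn: "0 \<le> bb n y" unfolding bb_def by (rule avg_abs_nn)

lemma aa_on: "I \<in> D n \<Longrightarrow> y \<in> I \<Longrightarrow> aa n y = avg M I f"
  unfolding aa_def using A_eq by simp
lemma bb_on: "I \<in> D n \<Longrightarrow> y \<in> I \<Longrightarrow> bb n y = avg M I (\<lambda>x. \<bar>f x\<bar>)"
  unfolding bb_def using A_eq by simp

lemma dep: "y \<in> U0 \<Longrightarrow> z \<in> U0 \<Longrightarrow> A n y = A n z \<Longrightarrow> j \<le> n \<Longrightarrow> aa j y = aa j z \<and> bb j y = bb j z"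
  unfolding aa_def bb_def using A_det by metis

lemma st_dep: "y \<in> U0 \<Longrightarrow> z \<in> U0 \<Longrightarrow> A n y = A n z \<Longrightarrow> st n y = st n z"
  unfolding st_def using Lf_dep[of n "\<lambda>j. aa j y" "\<lambda>j. aa j z" "\<lambda>j. bb j y" "\<lambda>j. bb j z"] dep by metis

lemma md_pt:
  assumes x: "x \<in> U0"
  shows "(\<Sum>I\<in>D n. ennreal ((mart_diff M D I n f x)\<^sup>2)) = ennreal ((aa (Suc n) x - aa n x)\<^sup>2)"
proof -
  have Ax: "A n x \<in> D n" "x \<in> A n x" using A_in[OF x] by auto
  have md0: "mart_diff M D I n f x = 0" if I: "I \<in> D n" "I \<noteq> A n x" for I
  proof -
    have xI: "x \<notin> I" using A_eq I by metis
    have "indicator I' x = (0::real)" if "I' \<in> ch D I n" for I'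
      using that xI by (auto simp: ch_def indicator_def)
    then show ?thesis using xI unfolding mart_diff_def cond_exp_atom_def by (simp add: sum.neutral)
  qed
  have mdA: "mart_diff M D (A n x) n f x = aa (Suc n) x - aa n x"
  proof -
    have "(\<Sum>I'\<in>ch D (A n x) n. avg M I' f * indicator I' x) = avg M (A (Suc n) x) f"
      using pt_sum[OF x ch_sub, of "\<lambda>I'. avg M I' f" "A n x" n] A_ch[OF Ax] by simp
    then show ?thesis unfolding mart_diff_def cond_exp_atom_def aa_def using Ax(2) by simp
  qed
  have "(\<Sum>I\<in>D n. ennreal ((mart_diff M D I n f x)\<^sup>2)) =
      ennreal ((mart_diff M D (A n x) n f x)\<^sup>2) + (\<Sum>I\<in>D n - {A n x}. ennreal ((mart_diff M D I n f x)\<^sup>2))"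
    by (rule sum.remove[OF Dfin Ax(1)])
  also have "(\<Sum>I\<in>D n - {A n x}. ennreal ((mart_diff M D I n f x)\<^sup>2)) = 0"
    using md0 by (intro sum.neutral) auto
  finally show ?thesis using mdA by simp
qed

lemma sp_pt:
  assumes x: "x \<in> U0"
  shows "(\<Sum>I\<in>{I. (I, n) \<in> SS}. ennreal ((avg M I (\<lambda>y. \<bar>f y\<bar>))\<^sup>2 * indicator I x))
     = ennreal (if st n x then (bb n x)\<^sup>2 else 0)"
proof -
  define F where "F = {I. (I, n) \<in> SS}"
  have F: "F \<subseteq> D n" unfolding F_def SS_def by auto
  have Ax: "A n x \<in> D n" "x \<in> A n x" using A_in[OF x] by auto
  have iff: "A n x \<in> F \<longleftrightarrow> st n x"
  proof
    assume "A n x \<in> F"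
    then obtain y where y: "y \<in> A n x" "st n y" unfolding F_def SS_def by auto
    have "y \<in> U0" using y Dsub Ax by auto
    moreover have "A n y = A n x" using A_eq[OF Ax(1) y(1)] .
    ultimately show "st n x" using st_dep[OF _ x] y by blast
  next
    assume "st n x" then show "A n x \<in> F" unfolding F_def SS_def using Ax by auto
  qed
  have "(\<Sum>I\<in>F. ennreal ((avg M I (\<lambda>y. \<bar>f y\<bar>))\<^sup>2 * indicator I x))
      = ennreal (\<Sum>I\<in>F. (avg M I (\<lambda>y. \<bar>f y\<bar>))\<^sup>2 * indicator I x)"
    by (rule sum_ennreal) simp
  also have "(\<Sum>I\<in>F. (avg M I (\<lambda>y. \<bar>f y\<bar>))\<^sup>2 * indicator I x) = (if A n x \<in> F then (avg M (A n x) (\<lambda>y. \<bar>f y\<bar>))\<^sup>2 else 0)"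
    by (rule pt_sum[OF x F])
  finally show ?thesis unfolding F_def[symmetric] using iff by (simp add: bb_def)
qed

lemma pointwise:
  assumes x: "x \<in> U0"
  shows "square_fn M D f x \<le> ennreal (sqrt 130) * sparse_square_fn M SS f x"
proof -
  have 1: "square_fn M D f x = esqrt (\<Sum>n. ennreal ((aa (Suc n) x - aa n x)\<^sup>2))"
    unfolding square_fn_def using md_pt[OF x] by simp
  have 2: "sparse_square_fn M SS f x = esqrt (\<Sum>n. ennreal (if st n x then (bb n x)\<^sup>2 else 0))"
    unfolding sparse_square_fn_def using sp_pt[OF x] by simp
  have "(\<Sum>n. ennreal ((aa (Suc n) x - aa n x)\<^sup>2)) \<le> ennreal 130 * (\<Sum>n. ennreal (if st n x then (bb n x)\<^sup>2 else 0))"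
    unfolding st_def using seq_enn[of "\<lambda>j. aa j x" "\<lambda>j. bb j x"] aa_bb[OF x] by blast
  then have "esqrt (\<Sum>n. ennreal ((aa (Suc n) x - aa n x)\<^sup>2)) \<le> esqrt (ennreal 130 * (\<Sum>n. ennreal (if st n x then (bb n x)\<^sup>2 else 0)))"
    by (rule esqrt_mono)
  then show ?thesis unfolding 1 2 esqrt_scale .
qed

end

context setting
begin

definition alive :: "nat \<Rightarrow> real \<Rightarrow> nat \<Rightarrow> real \<Rightarrow> bool" where
  "alive p lam j y \<longleftrightarrow> (\<forall>i. p \<le> i \<and> i \<le> j \<longrightarrow> bb i y \<le> 4 * lam)"

definition Wset :: "nat \<Rightarrow> real \<Rightarrow> nat \<Rightarrow> nat \<Rightarrow> real set \<Rightarrow> real \<Rightarrow> real set" where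
  "Wset p lam N n I s = {y \<in> I. s + (\<Sum>j\<in>{n..<N}. if alive p lam (Suc j) y then (aa (Suc j) y - aa j y)\<^sup>2 else 0) > 96 * lam\<^sup>2}"

definition Vset :: "real \<Rightarrow> nat \<Rightarrow> nat \<Rightarrow> real set \<Rightarrow> real set" where
  "Vset lam N n I = {y \<in> I. \<exists>m. n < m \<and> m \<le> N \<and> bb m y > 4 * lam}"

lemma in_atom_dep: "I \<in> D n \<Longrightarrow> n \<le> N \<Longrightarrow> y \<in> U0 \<Longrightarrow> z \<in> U0 \<Longrightarrow> A N y = A N z \<Longrightarrow> y \<in> I \<Longrightarrow> z \<in> I"
proof -
  assume h: "I \<in> D n" "n \<le> N" "y \<in> U0" "z \<in> U0" "A N y = A N z" "y \<in> I"
  have "A n y = I" using A_eq h by simp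
  moreover have "A n y = A n z" using A_det h by blast
  ultimately show "z \<in> I" using A_in[OF h(4), of n] by simp
qed

lemma alive_dep:
  assumes h: "y \<in> U0" "z \<in> U0" "A N y = A N z" and j: "j \<le> N"
  shows "alive p lam j y = alive p lam j z"
proof -
  have "bb i y = bb i z" if "i \<le> j" for i
  proof -
    have "i \<le> N" using that j by simp
    then show ?thesis using dep[OF h] by blast
  qed
  then show ?thesis unfolding alive_def by auto
qed

lemma alive_on:
  assumes I: "I \<in> D m" and y: "y \<in> I" and z: "z \<in> I"
  shows "alive p lam m y = alive p lam m z"
proof -
  have "y \<in> U0" "z \<in> U0" using Dsub[OF I] y z by auto
  moreover have "A m y = A m z" using A_eq[OF I y] A_eq[OF I z] by simp
  ultimately show ?thesis using alive_dep by blast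
qed

lemma alive_mono: "alive p lam j y \<Longrightarrow> i \<le> j \<Longrightarrow> alive p lam i y"
  unfolding alive_def by auto

lemma Wset_sets:
  assumes I: "I \<in> D n" and nN: "n \<le> N"
  shows "Wset p lam N n I s \<in> sets M"
proof -
  have "Wset p lam N n I s = {y \<in> U0. y \<in> I \<and> s + (\<Sum>j\<in>{n..<N}. if alive p lam (Suc j) y then (aa (Suc j) y - aa j y)\<^sup>2 else 0) > 96 * lam\<^sup>2}"
    unfolding Wset_def using Dsub[OF I] by auto
  also have "\<dots> \<in> sets M"
  proof (rule meas_dep[where N=N])
    fix y z assume h: "y \<in> U0" "z \<in> U0" "A N y = A N z"
      and P: "y \<in> I \<and> s + (\<Sum>j\<in>{n..<N}. if alive p lam (Suc j) y then (aa (Suc j) y - aa j y)\<^sup>2 else 0) > 96 * lam\<^sup>2"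
    have "z \<in> I" using in_atom_dep[OF I nN h] P by blast
    moreover have "(\<Sum>j\<in>{n..<N}. if alive p lam (Suc j) y then (aa (Suc j) y - aa j y)\<^sup>2 else 0)
        = (\<Sum>j\<in>{n..<N}. if alive p lam (Suc j) z then (aa (Suc j) z - aa j z)\<^sup>2 else 0)"
    proof (rule sum.cong)
      fix j assume "j \<in> {n..<N}"
      then have j: "Suc j \<le> N" "j \<le> N" by auto
      show "(if alive p lam (Suc j) y then (aa (Suc j) y - aa j y)\<^sup>2 else 0) =
          (if alive p lam (Suc j) z then (aa (Suc j) z - aa j z)\<^sup>2 else 0)"
        using alive_dep[OF h j(1)] dep[OF h j(1)] dep[OF h j(2)] by simp
    qed simp
    ultimately show "z \<in> I \<and> s + (\<Sum>j\<in>{n..<N}. if alive p lam (Suc j) z then (aa (Suc j) z - aa j z)\<^sup>2 else 0) > 96 * lam\<^sup>2"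
      using P by simp
  qed
  finally show ?thesis .
qed

lemma Vset_sets:
  assumes I: "I \<in> D n" and nN: "n \<le> N"
  shows "Vset lam N n I \<in> sets M"
proof -
  have "Vset lam N n I = {y \<in> U0. y \<in> I \<and> (\<exists>m. n < m \<and> m \<le> N \<and> bb m y > 4 * lam)}"
    unfolding Vset_def using Dsub[OF I] by auto
  also have "\<dots> \<in> sets M"
  proof (rule meas_dep[where N=N])
    fix y z assume h: "y \<in> U0" "z \<in> U0" "A N y = A N z"
      and P: "y \<in> I \<and> (\<exists>m. n < m \<and> m \<le> N \<and> bb m y > 4 * lam)"
    have "z \<in> I" using in_atom_dep[OF I nN h] P by blast
    moreover obtain m where "n < m" "m \<le> N" "bb m y > 4 * lam" using P by blast
    moreover have "bb m y = bb m z" using dep[OF h \<open>m \<le> N\<close>] by simp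
    ultimately show "z \<in> I \<and> (\<exists>m. n < m \<and> m \<le> N \<and> bb m z > 4 * lam)" by auto
  qed
  finally show ?thesis .
qed

lemma abs_f_int: "integrable M (\<lambda>x. \<bar>f x\<bar>)" using intf by (rule integrable_abs)

lemma V_bound:
  assumes lam: "0 \<le> lam"
  shows "\<forall>n I. N - n = k \<longrightarrow> n \<le> N \<longrightarrow> I \<in> D n \<longrightarrow> 4 * lam * measure M (Vset lam N n I) \<le> (LINT y:I|M. \<bar>f y\<bar>)"
proof (induction k)
  case 0
  show ?case
  proof (intro allI impI)
    fix n I assume h: "N - n = 0" "n \<le> N" "I \<in> D n"
    then have "Vset lam N n I = {}" unfolding Vset_def by auto
    then show "4 * lam * measure M (Vset lam N n I) \<le> (LINT y:I|M. \<bar>f y\<bar>)" using sint_abs_nn by simp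
  qed
next
  case (Suc k)
  show ?case
  proof (intro allI impI)
    fix n I assume h: "N - n = Suc k" "n \<le> N" "I \<in> D n"
    have nN: "Suc n \<le> N" "N - Suc n = k" using h by auto
    define piece where "piece I' = (if avg M I' (\<lambda>x. \<bar>f x\<bar>) > 4 * lam then I' else Vset lam N (Suc n) I')" for I'
    have psets: "piece I' \<in> sets M" if "I' \<in> ch D I n" for I'
    proof -
      have I'D: "I' \<in> D (Suc n)" using that ch_sub by auto
      show ?thesis using Dsets[OF I'D] Vset_sets[OF I'D nN(1)] unfolding piece_def by simp
    qed
    have incl: "Vset lam N n I \<subseteq> (\<Union>I'\<in>ch D I n. piece I')"
    proof
      fix y assume y: "y \<in> Vset lam N n I"
      then obtain m where m: "n < m" "m \<le> N" "bb m y > 4 * lam" and yI: "y \<in> I" unfolding Vset_def by auto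
      define I' where "I' = A (Suc n) y"
      have I'ch: "I' \<in> ch D I n" using A_ch[OF h(3) yI] I'_def by simp
      have yU: "y \<in> U0" using Dsub[OF h(3)] yI by auto
      have yI': "y \<in> I'" using A_in[OF yU] I'_def by simp
      have I'D: "I' \<in> D (Suc n)" using I'ch ch_sub by auto
      have "y \<in> piece I'"
      proof (cases "avg M I' (\<lambda>x. \<bar>f x\<bar>) > 4 * lam")
        case True then show ?thesis using yI' unfolding piece_def by simp
      next
        case False
        have "m \<noteq> Suc n" using False m(3) bb_on[OF I'D yI'] by auto
        then have "Suc n < m" using m(1) by simp
        then have "y \<in> Vset lam N (Suc n) I'" unfolding Vset_def using m yI' by blast
        then show ?thesis using False unfolding piece_def by simp
      qed
      then show "y \<in> (\<Union>I'\<in>ch D I n. piece I')" using I'ch by blast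
    qed
    have "measure M (Vset lam N n I) \<le> measure M (\<Union>I'\<in>ch D I n. piece I')"
      using incl psets ch_fin by (intro P.finite_measure_mono) auto
    also have "\<dots> \<le> (\<Sum>I'\<in>ch D I n. measure M (piece I'))"
      using psets ch_fin by (intro measure_UNION_le) auto
    finally have "4 * lam * measure M (Vset lam N n I) \<le> 4 * lam * (\<Sum>I'\<in>ch D I n. measure M (piece I'))"
      using lam by (intro mult_left_mono) auto
    then have m1: "4 * lam * measure M (Vset lam N n I) \<le> (\<Sum>I'\<in>ch D I n. 4 * lam * measure M (piece I'))"
      by (simp add: sum_distrib_left)
    have pb: "4 * lam * measure M (piece I') \<le> (LINT y:I'|M. \<bar>f y\<bar>)" if I': "I' \<in> ch D I n" for I'
    proof (cases "avg M I' (\<lambda>x. \<bar>f x\<bar>) > 4 * lam")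
      case True
      have I'D: "I' \<in> D (Suc n)" using I' ch_sub by auto
      have "4 * lam * measure M I' \<le> avg M I' (\<lambda>x. \<bar>f x\<bar>) * measure M I'"
        using True Dpos[OF I'D] by (intro mult_right_mono) auto
      then show ?thesis using True int_avg[OF I'D, of "\<lambda>x. \<bar>f x\<bar>"] unfolding piece_def by (simp add: mult.commute)
    next
      case False
      have I'D: "I' \<in> D (Suc n)" using I' ch_sub by auto
      then show ?thesis using False Suc.IH nN unfolding piece_def by simp
    qed
    have "(\<Sum>I'\<in>ch D I n. 4 * lam * measure M (piece I')) \<le> (\<Sum>I'\<in>ch D I n. LINT y:I'|M. \<bar>f y\<bar>)"
      using pb by (rule sum_mono)
    also have "\<dots> = (LINT y:I|M. \<bar>f y\<bar>)" using sint_ch[OF h(3) abs_f_int] by simp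
    finally show "4 * lam * measure M (Vset lam N n I) \<le> (LINT y:I|M. \<bar>f y\<bar>)" using m1 by linarith
  qed
qed

lemma alive_abs:
  assumes I: "I \<in> D n" and pn: "p \<le> n" and al: "\<forall>y\<in>I. alive p lam n y"
  shows "\<bar>avg M I f\<bar> \<le> 4 * lam"
proof -
  obtain y where y: "y \<in> I" using Dne[OF I] by auto
  have "bb n y \<le> 4 * lam" using al y pn unfolding alive_def by auto
  then show ?thesis using avg_abs[OF I] bb_on[OF I y] by simp
qed

lemma W_bound:
  assumes lam: "0 \<le> lam"
  shows "\<forall>n I s. N - n = k \<longrightarrow> n \<le> N \<longrightarrow> p \<le> n \<longrightarrow> I \<in> D n \<longrightarrow> (\<forall>y\<in>I. alive p lam n y) \<longrightarrow> 0 \<le> s \<longrightarrow>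
    96 * lam\<^sup>2 * measure M (Wset p lam N n I s) + measure M I * (avg M I f)\<^sup>2
      \<le> (s + 16 * lam\<^sup>2) * measure M I + 8 * lam * (LINT y:I|M. \<bar>f y\<bar>)"
proof (induction k)
  case 0
  show ?case
  proof (intro allI impI)
    fix n I and s :: real assume h: "N - n = 0" "n \<le> N" "p \<le> n" "I \<in> D n" "\<forall>y\<in>I. alive p lam n y" "0 \<le> s"
    have nN: "n = N" using h by simp
    have W: "Wset p lam N n I s = (if s > 96 * lam\<^sup>2 then I else {})" unfolding Wset_def nN by auto
    have mu0: "0 \<le> measure M I" by simp
    have 1: "96 * lam\<^sup>2 * measure M (Wset p lam N n I s) \<le> s * measure M I"
      using mu0 h(6) by (simp add: W mult_right_mono)
    have ab: "\<bar>avg M I f\<bar> \<le> 4 * lam" by (rule alive_abs[OF h(4) h(3) h(5)])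
    have "(avg M I f)\<^sup>2 \<le> (4 * lam)\<^sup>2"
      using power_mono[OF ab abs_ge_zero, of 2] by simp
    then have 2: "measure M I * (avg M I f)\<^sup>2 \<le> measure M I * (16 * lam\<^sup>2)"
      using mu0 by (intro mult_left_mono) (auto simp: power_mult_distrib)
    have 3: "0 \<le> 8 * lam * (LINT y:I|M. \<bar>f y\<bar>)" using lam sint_abs_nn by simp
    show "96 * lam\<^sup>2 * measure M (Wset p lam N n I s) + measure M I * (avg M I f)\<^sup>2
      \<le> (s + 16 * lam\<^sup>2) * measure M I + 8 * lam * (LINT y:I|M. \<bar>f y\<bar>)"
      using 1 2 3 by (simp add: algebra_simps)
  qed
next
  case (Suc k)
  show ?case
  proof (intro allI impI)
    fix n I and s :: real assume h: "N - n = Suc k" "n \<le> N" "p \<le> n" "I \<in> D n" "\<forall>y\<in>I. alive p lam n y" "0 \<le> s"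
    have nN: "Suc n \<le> N" "N - Suc n = k" "n < N" using h by auto
    define T where "T = 96 * lam\<^sup>2"
    have T0: "0 \<le> T" unfolding T_def by simp
    define a where "a = avg M I f"
    have ab: "\<bar>a\<bar> \<le> 4 * lam" unfolding a_def by (rule alive_abs[OF h(4) h(3) h(5)])
    define piece where "piece I' = (if (\<forall>y\<in>I'. alive p lam (Suc n) y)
       then Wset p lam N (Suc n) I' (s + (avg M I' f - a)\<^sup>2) else (if s > T then I' else {}))" for I'
    have chD: "I' \<in> D (Suc n)" if "I' \<in> ch D I n" for I' using that ch_sub by auto
    have psets: "piece I' \<in> sets M" if "I' \<in> ch D I n" for I'
      using Dsets[OF chD[OF that]] Wset_sets[OF chD[OF that] nN(1)] unfolding piece_def by simp
    have incl: "Wset p lam N n I s \<subseteq> (\<Union>I'\<in>ch D I n. piece I')"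
    proof
      fix y assume y: "y \<in> Wset p lam N n I s"
      define t where "t j = (if alive p lam (Suc j) y then (aa (Suc j) y - aa j y)\<^sup>2 else 0)" for j
      have yI: "y \<in> I" and ys: "s + (\<Sum>j\<in>{n..<N}. t j) > T" using y unfolding Wset_def t_def T_def by auto
      define I' where "I' = A (Suc n) y"
      have I'ch: "I' \<in> ch D I n" using A_ch[OF h(4) yI] I'_def by simp
      have yU: "y \<in> U0" using Dsub[OF h(4)] yI by auto
      have yI': "y \<in> I'" using A_in[OF yU] I'_def by simp
      have I'D: "I' \<in> D (Suc n)" using chD[OF I'ch] .
      have split: "(\<Sum>j\<in>{n..<N}. t j) = t n + (\<Sum>j\<in>{Suc n..<N}. t j)"
        using nN(3) by (rule sum.atLeast_Suc_lessThan)
      have "y \<in> piece I'"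
      proof (cases "\<forall>z\<in>I'. alive p lam (Suc n) z")
        case True
        then have al: "alive p lam (Suc n) y" using yI' by blast
        have "t n = (avg M I' f - a)\<^sup>2"
          unfolding t_def a_def using al aa_on[OF I'D yI'] aa_on[OF h(4) yI] by simp
        then have "y \<in> Wset p lam N (Suc n) I' (s + (avg M I' f - a)\<^sup>2)"
          using ys split yI' unfolding Wset_def t_def T_def by (simp add: add.assoc)
        then show ?thesis using True unfolding piece_def by simp
      next
        case False
        then have nal: "\<not> alive p lam (Suc n) y" using alive_on[OF I'D yI'] by blast
        have "t j = 0" if "j \<in> {n..<N}" for j
        proof -
          have "\<not> alive p lam (Suc j) y" using nal alive_mono[of p lam "Suc j" y "Suc n"] that by auto
          then show ?thesis unfolding t_def by simp
        qed
        then have "(\<Sum>j\<in>{n..<N}. t j) = 0" by simp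
        then have "s > T" using ys by simp
        then have "piece I' = I'" unfolding piece_def by (subst if_not_P[OF False]) simp
        then show ?thesis using yI' by simp
      qed
      then show "y \<in> (\<Union>I'\<in>ch D I n. piece I')" using I'ch by blast
    qed
    have "measure M (Wset p lam N n I s) \<le> measure M (\<Union>I'\<in>ch D I n. piece I')"
      using incl psets ch_fin by (intro P.finite_measure_mono) auto
    also have "\<dots> \<le> (\<Sum>I'\<in>ch D I n. measure M (piece I'))"
      using psets ch_fin by (intro measure_UNION_le) auto
    finally have "T * measure M (Wset p lam N n I s) \<le> T * (\<Sum>I'\<in>ch D I n. measure M (piece I'))"
      using T0 by (intro mult_left_mono) auto
    then have m1: "T * measure M (Wset p lam N n I s) \<le> (\<Sum>I'\<in>ch D I n. T * measure M (piece I'))"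
      by (simp add: sum_distrib_left)
    define c where "c I' = s * measure M I' + 16 * lam\<^sup>2 * measure M I' + 8 * lam * (LINT y:I'|M. \<bar>f y\<bar>)
        + a\<^sup>2 * measure M I' - 2 * a * (LINT y:I'|M. f y)" for I'
    have pb: "T * measure M (piece I') \<le> c I'" if I': "I' \<in> ch D I n" for I'
    proof -
      have I'D: "I' \<in> D (Suc n)" using chD[OF I'] .
      define a' where "a' = avg M I' f"
      define mu where "mu = measure M I'"
      have mu0: "0 \<le> mu" unfolding mu_def by simp
      have intf': "(LINT y:I'|M. f y) = mu * a'" unfolding mu_def a'_def by (rule int_avg[OF I'D])
      show ?thesis
      proof (cases "\<forall>y\<in>I'. alive p lam (Suc n) y")
        case True
        have IH: "T * measure M (Wset p lam N (Suc n) I' (s + (a' - a)\<^sup>2)) + mu * a'\<^sup>2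
            \<le> (s + (a' - a)\<^sup>2 + 16 * lam\<^sup>2) * mu + 8 * lam * (LINT y:I'|M. \<bar>f y\<bar>)"
          using Suc.IH nN h(3) I'D True h(6) unfolding T_def mu_def a'_def by simp
        have alg: "(s + (a' - a)\<^sup>2 + 16 * lam\<^sup>2) * mu - mu * a'\<^sup>2 = s * mu + 16 * lam\<^sup>2 * mu + a\<^sup>2 * mu - 2 * a * (mu * a')"
          by (simp add: power2_eq_square algebra_simps)
        have "T * measure M (piece I') = T * measure M (Wset p lam N (Suc n) I' (s + (a' - a)\<^sup>2))"
          using True unfolding piece_def a'_def by simp
        then show ?thesis using IH alg unfolding c_def intf' mu_def[symmetric] by linarith
      next
        case False
        have pe: "piece I' = (if s > T then I' else {})" unfolding piece_def by (subst if_not_P[OF False]) simp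
        have p1: "T * measure M (piece I') \<le> s * mu"
        proof (cases "s > T")
          case True then show ?thesis using mu0 unfolding pe mu_def by (simp add: mult_right_mono)
        next
          case nT: False then show ?thesis using mu0 h(6) unfolding pe mu_def by simp
        qed
        have ia: "\<bar>LINT y:I'|M. f y\<bar> \<le> (LINT y:I'|M. \<bar>f y\<bar>)"
          using avg_abs[OF I'D] int_avg[OF I'D, of f] int_avg[OF I'D, of "\<lambda>y. \<bar>f y\<bar>"] Dpos[OF I'D]
          by (simp add: abs_mult mult_left_mono)
        have "a * (LINT y:I'|M. f y) \<le> \<bar>a\<bar> * \<bar>LINT y:I'|M. f y\<bar>" by (simp add: abs_mult[symmetric])
        also have "\<dots> \<le> (4 * lam) * (LINT y:I'|M. \<bar>f y\<bar>)"
          using ab ia by (intro mult_mono) auto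
        finally have p2: "a * (LINT y:I'|M. f y) \<le> 4 * lam * (LINT y:I'|M. \<bar>f y\<bar>)" .
        have p3: "0 \<le> 16 * lam\<^sup>2 * mu" "0 \<le> a\<^sup>2 * mu" using mu0 by simp_all
        show ?thesis using p1 p2 p3 unfolding c_def mu_def[symmetric] by linarith
      qed
    qed
    have "(\<Sum>I'\<in>ch D I n. T * measure M (piece I')) \<le> (\<Sum>I'\<in>ch D I n. c I')"
      using pb by (rule sum_mono)
    also have "(\<Sum>I'\<in>ch D I n. c I') = s * (\<Sum>I'\<in>ch D I n. measure M I') + 16 * lam\<^sup>2 * (\<Sum>I'\<in>ch D I n. measure M I')
        + 8 * lam * (\<Sum>I'\<in>ch D I n. LINT y:I'|M. \<bar>f y\<bar>) + a\<^sup>2 * (\<Sum>I'\<in>ch D I n. measure M I')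
        - 2 * a * (\<Sum>I'\<in>ch D I n. LINT y:I'|M. f y)"
      unfolding c_def by (simp add: sum.distrib sum_subtractf sum_distrib_left)
    also have "\<dots> = s * measure M I + 16 * lam\<^sup>2 * measure M I + 8 * lam * (LINT y:I|M. \<bar>f y\<bar>)
        + a\<^sup>2 * measure M I - 2 * a * (LINT y:I|M. f y)"
      using meas_ch[OF h(4)] sint_ch[OF h(4) abs_f_int] sint_ch[OF h(4) intf] by simp
    finally have m2: "T * measure M (Wset p lam N n I s) \<le> s * measure M I + 16 * lam\<^sup>2 * measure M I + 8 * lam * (LINT y:I|M. \<bar>f y\<bar>)
        + a\<^sup>2 * measure M I - 2 * a * (LINT y:I|M. f y)" using m1 by linarith
    have "(LINT y:I|M. f y) = measure M I * a" unfolding a_def by (rule int_avg[OF h(4)])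
    then have "a\<^sup>2 * measure M I - 2 * a * (LINT y:I|M. f y) = - (measure M I * a\<^sup>2)"
      by (simp add: power2_eq_square algebra_simps)
    then show "96 * lam\<^sup>2 * measure M (Wset p lam N n I s) + measure M I * (avg M I f)\<^sup>2
      \<le> (s + 16 * lam\<^sup>2) * measure M I + 8 * lam * (LINT y:I|M. \<bar>f y\<bar>)"
      using m2 unfolding T_def a_def[symmetric] by (simp add: algebra_simps)
  qed
qed

end

context setting
begin

lemma zero_avg:
  assumes J: "J \<in> D p" and z: "avg M J (\<lambda>x. \<bar>f x\<bar>) = 0" and y: "y \<in> J" and pm: "p \<le> m"
  shows "bb m y = 0 \<and> aa m y = 0"
proof -
  have yU: "y \<in> U0" using Dsub[OF J] y by auto
  have Am: "A m y \<in> D m" using A_in[OF yU] by simp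
  have sub: "A m y \<subseteq> J" using A_mono[OF yU pm] A_eq[OF J y] by simp
  have "(LINT x:A m y|M. \<bar>f x\<bar>) \<le> (LINT x:J|M. \<bar>f x\<bar>)"
    unfolding set_lebesgue_integral_def
  proof (rule Bochner_Integration.integral_mono)
    show "integrable M (\<lambda>x. indicator (A m y) x *\<^sub>R \<bar>f x\<bar>)"
      using Dsets[OF Am] abs_f_int by (rule Bochner_Integration.integrable_mult_indicator)
    show "integrable M (\<lambda>x. indicator J x *\<^sub>R \<bar>f x\<bar>)"
      using Dsets[OF J] abs_f_int by (rule Bochner_Integration.integrable_mult_indicator)
    fix x show "indicator (A m y) x *\<^sub>R \<bar>f x\<bar> \<le> indicator J x *\<^sub>R \<bar>f x\<bar>"
      using sub by (auto simp: indicator_def)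
  qed
  also have "(LINT x:J|M. \<bar>f x\<bar>) = 0" using int_avg[OF J, of "\<lambda>x. \<bar>f x\<bar>"] z by simp
  finally have "(LINT x:A m y|M. \<bar>f x\<bar>) \<le> 0" .
  then have "bb m y \<le> 0" unfolding bb_def avg_def using Dpos[OF Am] by (simp add: divide_nonpos_pos)
  then have b0: "bb m y = 0" using bb_nn[of m y] by simp
  then show ?thesis using aa_bb[OF yU, of m] by simp
qed

lemma chS_prop:
  assumes J: "(J0, p) \<in> SS" and c: "(I, k) \<in> chS SS (J0, p)" and y: "y \<in> I"
  shows "I \<in> D k \<and> y \<in> J0 \<and> p < k \<and> st k y \<and> st p y \<and> (\<forall>i. p < i \<and> i < k \<longrightarrow> \<not> st i y)"
proof -
  have IS: "(I, k) \<in> SS" and al: "atom_less (I, k) (J0, p)"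
    and mx: "\<not> (\<exists>b\<in>SS. atom_less b (J0, p) \<and> atom_less (I, k) b)"
    using c unfolding chS_def by auto
  have ID: "I \<in> D k" and "\<exists>z\<in>I. st k z" using IS unfolding SS_def by auto
  then obtain z where z: "z \<in> I" "st k z" by blast
  have J0D: "J0 \<in> D p" and "\<exists>z\<in>J0. st p z" using J unfolding SS_def by auto
  then obtain w where w: "w \<in> J0" "st p w" by blast
  have IJ: "I \<subseteq> J0" "p \<le> k" "(I, k) \<noteq> (J0, p)" using al unfolding atom_less_def by auto
  have yU: "y \<in> U0" using Dsub[OF ID] y by auto
  have yJ: "y \<in> J0" using IJ y by auto
  have stk: "st k y"
    using st_dep[of z y k] z Dsub[OF ID] yU A_eq[OF ID y] A_eq[OF ID z(1)] by auto
  have stp: "st p y"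
    using st_dep[of w y p] w Dsub[OF J0D] yU A_eq[OF J0D yJ] A_eq[OF J0D w(1)] by auto
  have pk: "p < k"
  proof (rule ccontr)
    assume "\<not> p < k"
    then have "k = p" using IJ by simp
    then have "I = J0" using Deq[of I p J0 y] ID J0D y yJ by simp
    then show False using IJ \<open>k = p\<close> by simp
  qed
  have nb: "\<not> st i y" if i: "p < i" "i < k" for i
  proof
    assume sti: "st i y"
    define b where "b = (A i y, i)"
    have Ai: "A i y \<in> D i" "y \<in> A i y" using A_in[OF yU] by auto
    have bS: "b \<in> SS" unfolding b_def SS_def using Ai sti by auto
    have "A i y \<subseteq> J0" using A_mono[OF yU, of p i] i A_eq[OF J0D yJ] by simp
    then have 1: "atom_less b (J0, p)" unfolding b_def atom_less_def using i by auto
    have "I \<subseteq> A i y" using A_mono[OF yU, of i k] i A_eq[OF ID y] by simp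
    then have 2: "atom_less (I, k) b" unfolding b_def atom_less_def using i by auto
    show False using mx bS 1 2 by blast
  qed
  show ?thesis using ID yJ pk stk stp nb by blast
qed

lemma Wset_mono: "N \<le> N' \<Longrightarrow> Wset p lam N n I s \<subseteq> Wset p lam N' n I s"
proof
  fix y assume h: "N \<le> N'" "y \<in> Wset p lam N n I s"
  define t where "t j = (if alive p lam (Suc j) y then (aa (Suc j) y - aa j y)\<^sup>2 else 0)" for j
  have "(\<Sum>j\<in>{n..<N}. t j) \<le> (\<Sum>j\<in>{n..<N'}. t j)"
    using h(1) by (intro sum_mono2) (auto simp: t_def)
  then show "y \<in> Wset p lam N' n I s" using h(2) unfolding Wset_def t_def by auto
qed

end

context setting
begin

lemma sparse: "sparse_collection M SS"
  unfolding sparse_collection_def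
proof (intro ballI)
  fix J assume JS: "J \<in> SS"
  obtain J0 p where Jeq: "J = (J0, p)" by (cases J)
  have JS': "(J0, p) \<in> SS" using JS Jeq by simp
  have J0D: "J0 \<in> D p" using JS' unfolding SS_def by auto
  define lam where "lam = avg M J0 (\<lambda>x. \<bar>f x\<bar>)"
  have lam0: "0 \<le> lam" unfolding lam_def by (rule avg_abs_nn)
  define Gs where "Gs k = {I. (I, k) \<in> chS SS J}" for k
  define G where "G k = \<Union>(Gs k)" for k
  have GsD: "Gs k \<subseteq> D k" for k unfolding Gs_def chS_def SS_def by auto
  have Gsfin: "finite (Gs k)" for k using GsD Dfin finite_subset by blast
  have Gprop: "y \<in> J0 \<and> p < k \<and> stopc (\<lambda>j. aa j y) (\<lambda>j. bb j y) p k \<and> (\<forall>i. p < i \<and> i < k \<longrightarrow> \<not> st i y)"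
    if y: "y \<in> G k" for y k
  proof -
    obtain I where I: "(I, k) \<in> chS SS (J0, p)" "y \<in> I" using y unfolding G_def Gs_def Jeq by auto
    have cp: "I \<in> D k \<and> y \<in> J0 \<and> p < k \<and> st k y \<and> st p y \<and> (\<forall>i. p < i \<and> i < k \<longrightarrow> \<not> st i y)"
      by (rule chS_prop[OF JS' I])
    then have "stopc (\<lambda>j. aa j y) (\<lambda>j. bb j y) p k"
      by (intro Lf_stop_between) (auto simp: st_def)
    then show ?thesis using cp by blast
  qed
  have Gss: "Gs k \<subseteq> sets M" for k
  proof
    fix I assume "I \<in> Gs k" then have "I \<in> D k" using GsD by blast
    then show "I \<in> sets M" by (rule Dsets)
  qed
  have Gsets: "G k \<in> sets M" for k
    unfolding G_def using Gsfin Gss by (rule sets.finite_Union)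
  have sumG: "(\<Sum>I\<in>Gs k. emeasure M I) = emeasure M (G k)" for k
  proof -
    have "(\<Sum>I\<in>Gs k. emeasure M I) = emeasure M (\<Union>I\<in>Gs k. I)"
    proof (rule sum_emeasure)
      show "(\<lambda>I. I) ` Gs k \<subseteq> sets M" using Gss by simp
      show "finite (Gs k)" by (rule Gsfin)
      show "disjoint_family_on (\<lambda>I. I) (Gs k)"
      proof (unfold disjoint_family_on_def, intro ballI impI)
        fix a b assume ab: "a \<in> Gs k" "b \<in> Gs k" "a \<noteq> b"
        then have "a \<in> D k" "b \<in> D k" using GsD by auto
        then show "a \<inter> b = {}" using Deq[of a k b] ab(3) by blast
      qed
    qed
    then show ?thesis unfolding G_def by simp
  qed
  have Gdisj: "disjoint_family G"
  proof (unfold disjoint_family_on_def, intro ballI impI)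
    fix k k' :: nat assume kk: "k \<noteq> k'"
    show "G k \<inter> G k' = {}"
    proof (rule ccontr)
      assume "G k \<inter> G k' \<noteq> {}"
      then obtain y where y: "y \<in> G k" "y \<in> G k'" by blast
      have yU: "y \<in> U0" using Gprop[OF y(1)] Dsub[OF J0D] by auto
      have stk: "st k y" "st k' y"
      proof -
        obtain I where "(I, k) \<in> chS SS (J0, p)" "y \<in> I" using y(1) unfolding G_def Gs_def Jeq by auto
        then show "st k y" using chS_prop[OF JS'] by blast
        obtain I' where "(I', k') \<in> chS SS (J0, p)" "y \<in> I'" using y(2) unfolding G_def Gs_def Jeq by auto
        then show "st k' y" using chS_prop[OF JS'] by blast
      qed
      show False
      proof (cases "k < k'")
        case True then show False using Gprop[OF y(2)] Gprop[OF y(1)] stk by auto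
      next
        case False then have "k' < k" using kk by simp
        then show False using Gprop[OF y(2)] Gprop[OF y(1)] stk by auto
      qed
    qed
  qed
  have "(\<Sum>k. \<Sum>I\<in>{I. (I, k) \<in> chS SS J}. emeasure M I) = (\<Sum>k. emeasure M (G k))"
    using sumG unfolding Gs_def by simp
  also have "\<dots> = emeasure M (\<Union>k. G k)"
    using Gsets Gdisj by (intro suminf_emeasure) auto
  also have "\<dots> \<le> emeasure M J0 / 2"
  proof (cases "lam = 0")
    case True
    have "G k = {}" for k
    proof (rule ccontr)
      assume "G k \<noteq> {}"
      then obtain y where y: "y \<in> G k" by blast
      have gp: "y \<in> J0" "p < k" "stopc (\<lambda>j. aa j y) (\<lambda>j. bb j y) p k" using Gprop[OF y] by auto
      have z: "bb m y = 0 \<and> aa m y = 0" if "p \<le> m" for m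
        using zero_avg[OF J0D _ gp(1) that] True unfolding lam_def by simp
      have "(\<Sum>j\<in>{p..<k}. (aa (Suc j) y - aa j y)\<^sup>2) = 0"
        using z by (intro sum.neutral) auto
      then show False using gp(3) z[of k] z[of p] gp(2) unfolding stopc_def by simp
    qed
    then show ?thesis by simp
  next
    case False
    then have lampos: "0 < lam" using lam0 by simp
    define U where "U N = Vset lam (N + p) p J0 \<union> Wset p lam (N + p) p J0 0" for N
    have Usets: "U N \<in> sets M" for N
      unfolding U_def using Vset_sets[OF J0D] Wset_sets[OF J0D] by auto
    have Uinc: "incseq U"
    proof (rule incseq_SucI)
      fix N
      have "Vset lam (N + p) p J0 \<subseteq> Vset lam (Suc N + p) p J0" unfolding Vset_def by force
      moreover have "Wset p lam (N + p) p J0 0 \<subseteq> Wset p lam (Suc N + p) p J0 0" by (rule Wset_mono) simp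
      ultimately show "U N \<subseteq> U (Suc N)" unfolding U_def by blast
    qed
    have cover: "(\<Union>k. G k) \<subseteq> (\<Union>N. U N)"
    proof
      fix y assume "y \<in> (\<Union>k. G k)"
      then obtain k where y: "y \<in> G k" by blast
      have gp: "y \<in> J0" "p < k" "stopc (\<lambda>j. aa j y) (\<lambda>j. bb j y) p k" using Gprop[OF y] by auto
      have bp: "bb p y = lam" unfolding lam_def by (rule bb_on[OF J0D gp(1)])
      have "y \<in> U k"
      proof (cases "\<exists>m. p < m \<and> m \<le> k + p \<and> bb m y > 4 * lam")
        case True
        then have "y \<in> Vset lam (k + p) p J0" unfolding Vset_def using gp(1) by blast
        then show ?thesis unfolding U_def by blast
      next
        case False
        then have bm: "bb m y \<le> 4 * lam" if "p < m" "m \<le> k + p" for m using that by force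
        have "\<not> bb k y > 4 * bb p y" using bm[of k] gp(2) bp by simp
        then have big: "(\<Sum>j\<in>{p..<k}. (aa (Suc j) y - aa j y)\<^sup>2) > 96 * lam\<^sup>2"
          using gp(3) bp unfolding stopc_def by simp
        define t where "t j = (if alive p lam (Suc j) y then (aa (Suc j) y - aa j y)\<^sup>2 else 0)" for j
        have "(\<Sum>j\<in>{p..<k}. (aa (Suc j) y - aa j y)\<^sup>2) = (\<Sum>j\<in>{p..<k}. t j)"
        proof (rule sum.cong)
          fix j assume j: "j \<in> {p..<k}"
          have "alive p lam (Suc j) y" unfolding alive_def
          proof (intro allI impI)
            fix i assume i: "p \<le> i \<and> i \<le> Suc j"
            show "bb i y \<le> 4 * lam"
            proof (cases "i = p")
              case True then show ?thesis using bp lam0 by simp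
            next
              case False then show ?thesis using bm[of i] i j by auto
            qed
          qed
          then show "(aa (Suc j) y - aa j y)\<^sup>2 = t j" unfolding t_def by simp
        qed simp
        also have "\<dots> \<le> (\<Sum>j\<in>{p..<k + p}. t j)"
          by (intro sum_mono2) (auto simp: t_def)
        finally have "y \<in> Wset p lam (k + p) p J0 0" unfolding Wset_def t_def using gp(1) big by auto
        then show ?thesis unfolding U_def by blast
      qed
      then show "y \<in> (\<Union>N. U N)" by blast
    qed
    have Ub: "measure M (U N) \<le> measure M J0 / 2" for N
    proof -
      have intJ: "(LINT y:J0|M. \<bar>f y\<bar>) = measure M J0 * lam" unfolding lam_def by (rule int_avg[OF J0D])
      have "4 * lam * measure M (Vset lam (N + p) p J0) \<le> (LINT y:J0|M. \<bar>f y\<bar>)"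
        using V_bound[OF lam0, of "N + p" N] J0D by simp
      then have "lam * (4 * measure M (Vset lam (N + p) p J0)) \<le> lam * measure M J0"
        using intJ by (simp add: algebra_simps)
      then have v: "4 * measure M (Vset lam (N + p) p J0) \<le> measure M J0"
        using lampos by (simp add: mult_le_cancel_left_pos)
      have alJ: "\<forall>y\<in>J0. alive p lam p y"
        unfolding alive_def using bb_on[OF J0D] lam_def lam0 by auto
      have "96 * lam\<^sup>2 * measure M (Wset p lam (N + p) p J0 0) + measure M J0 * (avg M J0 f)\<^sup>2
          \<le> (0 + 16 * lam\<^sup>2) * measure M J0 + 8 * lam * (LINT y:J0|M. \<bar>f y\<bar>)"
        using W_bound[OF lam0, of "N + p" N p, THEN spec[of _ p], THEN spec[of _ J0], THEN spec[of _ 0]] J0D alJ by simp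
      moreover have "0 \<le> measure M J0 * (avg M J0 f)\<^sup>2" by simp
      moreover have "8 * lam * (LINT y:J0|M. \<bar>f y\<bar>) = 8 * lam\<^sup>2 * measure M J0"
        using intJ by (simp add: power2_eq_square)
      moreover have "(0 + 16 * lam\<^sup>2) * measure M J0 = 16 * lam\<^sup>2 * measure M J0" by simp
      ultimately have "96 * lam\<^sup>2 * measure M (Wset p lam (N + p) p J0 0) \<le> 24 * lam\<^sup>2 * measure M J0"
        by linarith
      then have "(24 * lam\<^sup>2) * (4 * measure M (Wset p lam (N + p) p J0 0)) \<le> (24 * lam\<^sup>2) * measure M J0"
        by (simp add: algebra_simps)
      then have w: "4 * measure M (Wset p lam (N + p) p J0 0) \<le> measure M J0"
        using lampos by (simp add: mult_le_cancel_left_pos)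
      have "measure M (U N) \<le> measure M (Vset lam (N + p) p J0) + measure M (Wset p lam (N + p) p J0 0)"
        unfolding U_def using Vset_sets[OF J0D] Wset_sets[OF J0D] by (intro measure_Un_le) auto
      then show ?thesis using v w by linarith
    qed
    have "emeasure M (\<Union>k. G k) \<le> emeasure M (\<Union>N. U N)"
      using cover Usets by (intro emeasure_mono) auto
    also have "\<dots> = (SUP N. emeasure M (U N))"
      using Usets Uinc by (intro SUP_emeasure_incseq[symmetric]) auto
    also have "\<dots> \<le> emeasure M J0 / 2"
    proof (rule SUP_least)
      fix N
      have "emeasure M (U N) = ennreal (measure M (U N))" by (rule P.emeasure_eq_measure)
      also have "\<dots> \<le> ennreal (measure M J0 / 2)" using Ub by (intro ennreal_leI)
      also have "\<dots> = ennreal (measure M J0) / ennreal 2"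
        by (rule divide_ennreal[symmetric]) auto
      also have "\<dots> = emeasure M J0 / 2" by (simp add: P.emeasure_eq_measure)
      finally show "emeasure M (U N) \<le> emeasure M J0 / 2" .
    qed
    finally show ?thesis .
  qed
  finally show "(\<Sum>k. \<Sum>I\<in>{I. (I, k) \<in> chS SS J}. emeasure M I) \<le> emeasure M (fst J) / 2"
    using Jeq by simp
qed

end

theorem lemma8p1:
  shows "\<exists>C::real. C > 0 \<and>
    (\<forall>(M::real measure) D (f::real \<Rightarrow> real).
       unit_prob M \<longrightarrow> atomic_filtration M D \<longrightarrow> integrable M f \<longrightarrow>
       (\<exists>S \<subseteq> atoms D. sparse_collection M S \<and>
          (AE x in M. square_fn M D f x \<le> ennreal C * sparse_square_fn M S f x)))"
proof (intro exI[of _ "sqrt 130"] conjI allI impI)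
  show "sqrt 130 > (0::real)" by simp
  fix M :: "real measure" and D :: "nat \<Rightarrow> real set set" and f :: "real \<Rightarrow> real"
  assume h: "unit_prob M" "atomic_filtration M D" "integrable M f"
  interpret setting M D f using h by unfold_locales
  show "\<exists>S \<subseteq> atoms D. sparse_collection M S \<and>
          (AE x in M. square_fn M D f x \<le> ennreal (sqrt 130) * sparse_square_fn M S f x)"
  proof (intro exI[of _ SS] conjI)
    show "SS \<subseteq> atoms D" unfolding SS_def atoms_def by auto
    show "sparse_collection M SS" by (rule sparse)
    show "AE x in M. square_fn M D f x \<le> ennreal (sqrt 130) * sparse_square_fn M SS f x"
      using pointwise spM by (intro AE_I2) auto
  qed
qed

end
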